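(* Let $\ell\ge1$ be an integer and $p$ an integer with $-1\le p\le \ell-1$. Then, as an identity of meromorphic functions of $x$, $$\Delta^\ell\left[\binom{x+p}{\ell}\psi(x)\right] = H_\ell+\psi(x+p+1),$$ where $\Delta g(x)=g(x+1)-g(x)$ is the forward difference operator.
   Context: $\psi=\Gamma'/\Gamma$ is the digamma function, $H_\ell=1+\frac12+\cdots+\frac1\ell$ the harmonic number, and $\binom{x}{n}=\frac{x(x-1)\cdots(x-n+1)}{n!}$ the generalized binomial coefficient. *)

theory Defs
  imports "HOL-Analysis.Analysis"
begin

definition fwd_diff :: "(complex \<Rightarrow> complex) \<Rightarrow> complex \<Rightarrow> complex" where
  "fwd_diff g = (\<lambda>x. g (x + 1) - g x)"

end

theory Submission
  imports Defs
begin

lemma fd_Suc: "(fwd_diff ^^ Suc n) f = fwd_diff ((fwd_diff ^^ n) f)"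
  by simp

lemma fd_app: "fwd_diff g x = g (x + 1) - g x"
  by (simp add: fwd_diff_def)

lemma fd_Suc_app: "(fwd_diff ^^ Suc n) f x = (fwd_diff ^^ n) f (x + 1) - (fwd_diff ^^ n) f x"
  by (simp only: funpow.simps o_apply) (rule fd_app)

lemma fd_cong: "(\<And>k. k \<le> n \<Longrightarrow> f (x + of_nat k) = g (x + of_nat k)) \<Longrightarrow>
   (fwd_diff ^^ n) f x = (fwd_diff ^^ n) g x"
proof (induction n arbitrary: x)
  case 0
  then show ?case using 0[of 0] by simp
next
  case (Suc n)
  have a: "(fwd_diff ^^ n) f x = (fwd_diff ^^ n) g x"
    using Suc.prems by (intro Suc.IH) auto
  have b: "(fwd_diff ^^ n) f (x+1) = (fwd_diff ^^ n) g (x+1)"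
  proof (intro Suc.IH)
    fix k assume "k \<le> n"
    then show "f (x + 1 + of_nat k) = g (x + 1 + of_nat k)"
      using Suc.prems[of "Suc k"] by (simp add: add_ac)
  qed
  show ?case using a b by (simp only: fd_Suc_app)
qed

lemma fd_add: "(fwd_diff ^^ n) (\<lambda>y. f y + g y) = (\<lambda>y. (fwd_diff ^^ n) f y + (fwd_diff ^^ n) g y)"
  by (induction n) (simp_all add: fwd_diff_def algebra_simps)

lemma fd_diff: "(fwd_diff ^^ n) (\<lambda>y. f y - g y) = (\<lambda>y. (fwd_diff ^^ n) f y - (fwd_diff ^^ n) g y)"
  by (induction n) (simp_all add: fwd_diff_def algebra_simps)

lemma fd_cmult: "(fwd_diff ^^ n) (\<lambda>y. c * f y) = (\<lambda>y. c * (fwd_diff ^^ n) f y)"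
  by (induction n) (simp_all add: fwd_diff_def algebra_simps)

lemma fd_shift: "(fwd_diff ^^ n) (\<lambda>y. f (y + 1)) = (\<lambda>y. (fwd_diff ^^ n) f (y + 1))"
  by (induction n) (simp_all add: fwd_diff_def algebra_simps)

lemma fd_bin: "(fwd_diff ^^ n) (\<lambda>y. (y + b) gchoose k) =
   (\<lambda>y. if n \<le> k then (y + b) gchoose (k - n) else 0)"
proof (induction n)
  case 0
  then show ?case by simp
next
  case (Suc n)
  show ?case
  proof (rule ext)
    fix y :: complex
    consider "Suc n \<le> k" | "n = k" | "n > k" by linarith
    then show "(fwd_diff ^^ Suc n) (\<lambda>y. (y + b) gchoose k) y =
       (if Suc n \<le> k then (y + b) gchoose (k - Suc n) else 0)"
    proof cases
      case 1
      then obtain m where m: "k - n = Suc m" "k - Suc n = m"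
        by (metis Suc_diff_Suc Suc_le_lessD)
      have "(y + 1 + b) gchoose (Suc m) = ((y + b) gchoose m) + ((y+b) gchoose Suc m)"
        using gbinomial_Suc_Suc[of "y+b" m] by (simp add: add_ac)
      then show ?thesis using 1 m by (simp add: Suc.IH fd_app add_ac)
    next
      case 2
      show ?thesis by (simp only: fd_Suc_app Suc.IH) (simp add: 2)
    next
      case 3
      show ?thesis using 3 by (simp only: fd_Suc_app Suc.IH) auto
    qed
  qed
qed

lemma fd_P:
  fixes a j m :: nat and x :: complex
  assumes "a < j" "j - 1 \<le> m" "\<And>k. x + of_nat k \<noteq> 0"
  shows "(fwd_diff ^^ m) (\<lambda>y. ((y + of_nat a) gchoose j) / y) x
     = (if m = j - 1 then 1 / of_nat j else 0)"
  using assms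
proof (induction a arbitrary: j m)
  case 0
  have "(fwd_diff ^^ m) (\<lambda>y. ((y + of_nat 0) gchoose j) / y) x
      = (fwd_diff ^^ m) (\<lambda>y. (1 / of_nat j) * ((y + (-1)) gchoose (j - 1))) x"
  proof (rule fd_cong)
    fix k assume "k \<le> m"
    define y where "y = x + of_nat k"
    have y0: "y \<noteq> 0" using 0 y_def by auto
    obtain i where i: "j = Suc i" using 0 by (cases j) auto
    have "of_nat (Suc i) * (y gchoose Suc i) = y * ((y - 1) gchoose i)"
      by (rule gbinomial_absorption)
    moreover have "of_nat (Suc i) \<noteq> (0::complex)" by (simp del: of_nat_Suc)
    ultimately have "y gchoose Suc i = y * ((y - 1) gchoose i) / of_nat (Suc i)"
      by (simp add: eq_divide_eq mult.commute del: of_nat_Suc)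
    then have "(y gchoose j) / y = (1 / of_nat j) * ((y + (-1)) gchoose (j - 1))"
      using y0 i by simp
    then show "((x + of_nat k + of_nat 0) gchoose j) / (x + of_nat k) =
      (1 / of_nat j) * ((x + of_nat k + (-1)) gchoose (j - 1))" by (simp add: y_def)
  qed
  also have "\<dots> = (if m = j - 1 then 1 / of_nat j else 0)"
    using 0 by (simp only: fd_cmult fd_bin) simp
  finally show ?case .
next
  case (Suc a)
  obtain i where i: "j = Suc i" using Suc by (cases j) auto
  have "(fwd_diff ^^ m) (\<lambda>y. ((y + of_nat (Suc a)) gchoose j) / y) x
      = (fwd_diff ^^ m) (\<lambda>y. ((y + of_nat a) gchoose j) / y + ((y + of_nat a) gchoose i) / y) x"
  proof (rule fd_cong)
    fix k
    have "(x + of_nat k + of_nat a + 1) gchoose Suc i = ((x + of_nat k + of_nat a) gchoose i) +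
       ((x + of_nat k + of_nat a) gchoose Suc i)" by (rule gbinomial_Suc_Suc)
    then show "((x + of_nat k + of_nat (Suc a)) gchoose j) / (x + of_nat k) =
       ((x + of_nat k + of_nat a) gchoose j) / (x + of_nat k) + ((x + of_nat k + of_nat a) gchoose i) / (x + of_nat k)"
      using i by (simp add: add_ac add_divide_distrib)
  qed
  also have "\<dots> = (fwd_diff ^^ m) (\<lambda>y. ((y + of_nat a) gchoose j) / y) x
     + (fwd_diff ^^ m) (\<lambda>y. ((y + of_nat a) gchoose i) / y) x"
    by (simp add: fd_add)
  also have "(fwd_diff ^^ m) (\<lambda>y. ((y + of_nat a) gchoose j) / y) x = (if m = j - 1 then 1 / of_nat j else 0)"
    using Suc by (intro Suc.IH) auto
  also have "(fwd_diff ^^ m) (\<lambda>y. ((y + of_nat a) gchoose i) / y) x = 0"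
    using Suc.IH[of i m] Suc.prems i by auto
  finally show ?case by simp
qed

lemma main:
  fixes l q :: nat and x :: complex
  assumes "q \<le> l" "x \<notin> \<int>\<^sub>\<le>\<^sub>0"
  shows "(fwd_diff ^^ l) (\<lambda>z. ((z + of_nat q - 1) gchoose l) * Digamma z) x
           = harm l + Digamma (x + of_nat q)"
  using assms
proof (induction l arbitrary: q x)
  case 0
  then show ?case by (simp add: harm_def)
next
  case (Suc n)
  have nz: "\<And>x k. x \<notin> \<int>\<^sub>\<le>\<^sub>0 \<Longrightarrow> x + of_nat k \<noteq> (0::complex)"
  proof
    fix x :: complex and k :: nat assume "x \<notin> \<int>\<^sub>\<le>\<^sub>0" "x + of_nat k = 0"
    then have "x = - of_nat k" by (simp add: eq_neg_iff_add_eq_0)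
    then show False using \<open>x \<notin> \<int>\<^sub>\<le>\<^sub>0\<close> by auto
  qed
  have small: "(fwd_diff ^^ Suc n) (\<lambda>z. ((z + of_nat q - 1) gchoose Suc n) * Digamma z) x
           = harm (Suc n) + Digamma (x + of_nat q)"
    if q: "q \<le> n" and x: "x \<notin> \<int>\<^sub>\<le>\<^sub>0" for q x
  proof -
    have "(fwd_diff ^^ Suc n) (\<lambda>z. ((z + of_nat q - 1) gchoose Suc n) * Digamma z) x
       = (fwd_diff ^^ n) (fwd_diff (\<lambda>z. ((z + of_nat q - 1) gchoose Suc n) * Digamma z)) x"
      by (simp add: funpow_Suc_right del: funpow.simps)
    also have "\<dots> = (fwd_diff ^^ n) (\<lambda>z. ((z + of_nat q - 1) gchoose n) * Digamma z
         + ((z + of_nat q) gchoose Suc n) / z) x"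
    proof (rule fd_cong)
      fix k
      define y where "y = x + of_nat k"
      have y0: "y \<noteq> 0" using nz x y_def by auto
      have ps: "Digamma (y + 1) = Digamma y + 1 / y" using y0 by (rule Digamma_plus1)
      have pa: "(y + of_nat q - 1 + 1) gchoose Suc n = ((y + of_nat q - 1) gchoose n) +
         ((y + of_nat q - 1) gchoose Suc n)" by (rule gbinomial_Suc_Suc)
      have "fwd_diff (\<lambda>z. ((z + of_nat q - 1) gchoose Suc n) * Digamma z) y =
          ((y + of_nat q - 1) gchoose n) * Digamma y + ((y + of_nat q) gchoose Suc n) / y"
        unfolding fwd_diff_def using pa ps y0
        by (simp add: algebra_simps add_divide_distrib)
      then show "fwd_diff (\<lambda>z. ((z + of_nat q - 1) gchoose Suc n) * Digamma z) (x + of_nat k) =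
          ((x + of_nat k + of_nat q - 1) gchoose n) * Digamma (x + of_nat k)
          + ((x + of_nat k + of_nat q) gchoose Suc n) / (x + of_nat k)"
        by (simp add: y_def)
    qed
    also have "\<dots> = (fwd_diff ^^ n) (\<lambda>z. ((z + of_nat q - 1) gchoose n) * Digamma z) x
        + (fwd_diff ^^ n) (\<lambda>z. ((z + of_nat q) gchoose Suc n) / z) x"
      by (simp add: fd_add)
    also have "(fwd_diff ^^ n) (\<lambda>z. ((z + of_nat q - 1) gchoose n) * Digamma z) x
        = harm n + Digamma (x + of_nat q)" using Suc.IH q x by blast
    also have "(fwd_diff ^^ n) (\<lambda>z. ((z + of_nat q) gchoose Suc n) / z) x = 1 / of_nat (Suc n)"
      using fd_P[of q "Suc n" n x] q nz[OF x] by simp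
    finally show ?thesis by (simp add: harm_Suc inverse_eq_divide)
  qed
  show ?case
  proof (cases "q \<le> n")
    case True
    then show ?thesis using small Suc.prems by blast
  next
    case False
    then have qe: "q = Suc n" using Suc.prems by auto
    have x1: "x + 1 \<notin> \<int>\<^sub>\<le>\<^sub>0"
    proof
      assume "x + 1 \<in> \<int>\<^sub>\<le>\<^sub>0"
      then have "x + 1 - 1 \<in> \<int>\<^sub>\<le>\<^sub>0" by (intro nonpos_Ints_diff_Nats) auto
      then show False using Suc.prems by simp
    qed
    have "(fwd_diff ^^ Suc n) (\<lambda>z. ((z + of_nat q - 1) gchoose Suc n) * Digamma z) x
      = (fwd_diff ^^ Suc n) (\<lambda>z. ((z + 1 + of_nat n - 1) gchoose Suc n) * Digamma (z + 1)
          - ((z + of_nat n) gchoose Suc n) / z) x"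
    proof (rule fd_cong)
      fix k
      define y where "y = x + of_nat k"
      have y0: "y \<noteq> 0" using nz Suc.prems y_def by auto
      have ps: "Digamma (y + 1) = Digamma y + 1 / y" using y0 by (rule Digamma_plus1)
      have "((y + of_nat q - 1) gchoose Suc n) * Digamma y =
        ((y + 1 + of_nat n - 1) gchoose Suc n) * Digamma (y + 1) - ((y + of_nat n) gchoose Suc n) / y"
        using ps qe by (simp add: algebra_simps diff_divide_distrib)
      then show "((x + of_nat k + of_nat q - 1) gchoose Suc n) * Digamma (x + of_nat k) =
        ((x + of_nat k + 1 + of_nat n - 1) gchoose Suc n) * Digamma (x + of_nat k + 1)
          - ((x + of_nat k + of_nat n) gchoose Suc n) / (x + of_nat k)" by (simp add: y_def)
    qed
    also have "\<dots> = (fwd_diff ^^ Suc n) (\<lambda>z. ((z + 1 + of_nat n - 1) gchoose Suc n) * Digamma (z + 1)) x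
        - (fwd_diff ^^ Suc n) (\<lambda>z. ((z + of_nat n) gchoose Suc n) / z) x"
      by (simp only: fd_diff)
    also have "(fwd_diff ^^ Suc n) (\<lambda>z. ((z + of_nat n) gchoose Suc n) / z) x = 0"
      using fd_P[of n "Suc n" "Suc n" x] nz[OF Suc.prems(2)] by simp
    also have "(fwd_diff ^^ Suc n) (\<lambda>z. ((z + 1 + of_nat n - 1) gchoose Suc n) * Digamma (z + 1)) x
       = (fwd_diff ^^ Suc n) (\<lambda>z. ((z + of_nat n - 1) gchoose Suc n) * Digamma z) (x + 1)"
      using fd_shift[of "Suc n" "\<lambda>z. ((z + of_nat n - 1) gchoose Suc n) * Digamma z"]
      by (simp add: add_ac)
    also have "\<dots> = harm (Suc n) + Digamma (x + 1 + of_nat n)"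
      using small[of n "x+1"] x1 by simp
    finally show ?thesis using qe by (simp add: add_ac)
  qed
qed

theorem lemma3p1:
  fixes l :: nat and p :: int and x :: complex
  assumes "l \<ge> 1" and "-1 \<le> p" and "p \<le> int l - 1"
    and "\<And>k. k \<le> l \<Longrightarrow> x + of_nat k \<notin> \<int>\<^sub>\<le>\<^sub>0"
  shows "(fwd_diff ^^ l) (\<lambda>z. ((z + of_int p) gchoose l) * Digamma z) x
           = harm l + Digamma (x + of_int p + 1)"
proof -
  define q where "q = nat (p + 1)"
  have q: "q \<le> l" "of_int p = (of_nat q - 1 :: complex)"
    using assms unfolding q_def by auto
  have x: "x \<notin> \<int>\<^sub>\<le>\<^sub>0" using assms(4)[of 0] by simp
  have "(fwd_diff ^^ l) (\<lambda>z. ((z + of_nat q - 1) gchoose l) * Digamma z) x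
           = harm l + Digamma (x + of_nat q)" by (rule main[OF q(1) x])
  then show ?thesis using q(2) by (simp add: add_diff_eq)
qed

end
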